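(* Let $S=S(s,t,u,v;z)=\sum_{n\ge1}\sum_{D\in\mathcal A_n}s^{\mathrm{turn}(D)}t^{\mathrm{segment}(D)}u^{\mathrm{red}(D)}v^{\mathrm{return}(D)}z^n$, and define $B$ and $R$ in the same way with $\mathcal A_n$ replaced by $\mathcal B_n$ and $\mathcal R_n$ respectively. Then, as formal power series in $z$, $$S=uvz\,(1+S|_{v=1})(1+sB),\qquad B=vz\,(t+tR|_{v=1}+B|_{v=1})(1+sB),\qquad R=uvz\,(1+R|_{v=1}+B|_{v=1})(1+sB),$$ where $F|_{v=1}$ denotes $F$ with $v$ set to $1$.
   Context: A two-colored Dyck path of length $n$ is a lattice path from $(0,0)$ to $(n,n)$ with unit east and north steps never going above $y=x$, each east step colored black or red; it is encoded by $d_1\cdots d_n$ where $d_i$ is the number of north steps before the $i$-th east step, together with the colors. Condition (c-1): all east steps of height $0$ are red. Condition (c-2): the first east step of each positive height is black. $\mathcal A_n$ = two-colored Dyck paths of length $n$ satisfying (c-1) and (c-2); $\mathcal B_n$ (resp. $\mathcal R_n$) = two-colored Dyck paths of length $n$ satisfying (c-2) whose first east step is black (resp. red). Statistics: $\mathrm{turn}(D)$ = (number of east steps immediately followed by a north step) $-1$, equivalently $|\{i\in[n-1]:d_i<d_{i+1}\}|$; $\mathrm{segment}(D)$ = number of maximal runs of consecutive east steps that are all black and of equal height; $\mathrm{red}(D)$ = number of red east steps; $\mathrm{return}(D)$ = number of lattice points $(i,i)$, $1\le i\le n$, lying on $D$. *)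

theory Defs
  imports "HOL-Computational_Algebra.Formal_Power_Series"
begin

text \<open>A two-colored Dyck path of length n is encoded as a list p of length n;
  the i-th entry (0-indexed) is (d_{i+1}, red_{i+1}): the number of north steps
  before the (i+1)-th east step, and whether that east step is red (True) or
  black (False).\<close>

type_synonym cpath = "(nat \<times> bool) list"

definition dyck :: "nat \<Rightarrow> cpath \<Rightarrow> bool" where
  "dyck n p \<longleftrightarrow> length p = n \<and> sorted (map fst p) \<and> (\<forall>i<n. fst (p ! i) \<le> i)"

definition cond1 :: "cpath \<Rightarrow> bool" where
  "cond1 p \<longleftrightarrow> (\<forall>i<length p. fst (p ! i) = 0 \<longrightarrow> snd (p ! i))"

text \<open>(c-2): the first east step of each positive height is black.\<close>
definition cond2 :: "cpath \<Rightarrow> bool" where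
  "cond2 p \<longleftrightarrow> (\<forall>i<length p. 0 < fst (p ! i) \<and> (i = 0 \<or> fst (p ! (i - 1)) < fst (p ! i))
                     \<longrightarrow> \<not> snd (p ! i))"

definition setA :: "nat \<Rightarrow> cpath set" where
  "setA n = {p. dyck n p \<and> cond1 p \<and> cond2 p}"

definition setB :: "nat \<Rightarrow> cpath set" where
  "setB n = {p. dyck n p \<and> cond2 p \<and> 0 < n \<and> \<not> snd (p ! 0)}"

definition setR :: "nat \<Rightarrow> cpath set" where
  "setR n = {p. dyck n p \<and> cond2 p \<and> 0 < n \<and> snd (p ! 0)}"

definition turn :: "cpath \<Rightarrow> nat" where
  "turn p = card {i. i + 1 < length p \<and> fst (p ! i) < fst (p ! (i + 1))}"

text \<open>Number of maximal runs of consecutive black east steps of equal height: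
  counted by their first elements.\<close>
definition segment :: "cpath \<Rightarrow> nat" where
  "segment p = card {i. i < length p \<and> \<not> snd (p ! i) \<and>
      (i = 0 \<or> snd (p ! (i - 1)) \<or> fst (p ! (i - 1)) \<noteq> fst (p ! i))}"

definition red :: "cpath \<Rightarrow> nat" where
  "red p = card {i. i < length p \<and> snd (p ! i)}"

text \<open>Lattice points of the path from (0,0) to (n,n): on the vertical line x,
  the path occupies heights from d_x (0 for x = 0) up to d_{x+1} (n for x = n).\<close>
definition lattice_points :: "cpath \<Rightarrow> (nat \<times> nat) set" where
  "lattice_points p = {(x, y). x \<le> length p \<and>
      (if x = 0 then 0 else fst (p ! (x - 1))) \<le> y \<and>
      y \<le> (if x < length p then fst (p ! x) else length p)}"

definition return :: "cpath \<Rightarrow> nat" where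
  "return p = card {i \<in> {1..length p}. (i, i) \<in> lattice_points p}"

definition wt :: "'a::comm_ring_1 \<Rightarrow> 'a \<Rightarrow> 'a \<Rightarrow> 'a \<Rightarrow> cpath \<Rightarrow> 'a" where
  "wt s t u v p = s ^ turn p * t ^ segment p * u ^ red p * v ^ return p"

text \<open>Generating function  sum_{n>=1} sum_{D in X_n} weight(D) z^n  as a formal
  power series in z, with s,t,u,v elements of an arbitrary commutative ring
  (taking the ring to be a polynomial ring recovers the formal identity).\<close>
definition gf :: "(nat \<Rightarrow> cpath set) \<Rightarrow> 'a::comm_ring_1 \<Rightarrow> 'a \<Rightarrow> 'a \<Rightarrow> 'a \<Rightarrow> 'a fps" where
  "gf X s t u v = Abs_fps (\<lambda>n. if n = 0 then 0 else (\<Sum>p\<in>X n. wt s t u v p))"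

end

theory Submission imports Defs begin

definition sh :: "nat \<Rightarrow> nat \<times> bool \<Rightarrow> nat \<times> bool" where
  "sh k x = (fst x + k, snd x)"

definition phi :: "bool \<Rightarrow> cpath \<Rightarrow> cpath \<Rightarrow> cpath" where
  "phi c E F = (0, c) # E @ map (sh (Suc (length E))) F"

definition zp :: "(nat \<times> bool) option \<Rightarrow> cpath \<Rightarrow> ((nat \<times> bool) option \<times> (nat \<times> bool)) list" where
  "zp pr p = zip (pr # map Some p) p"

definition lastopt :: "(nat \<times> bool) option \<Rightarrow> cpath \<Rightarrow> (nat \<times> bool) option" where
  "lastopt pr xs = (if xs = [] then pr else Some (last xs))"

lemma zp_Nil[simp]: "zp pr [] = []" by (simp add: zp_def)
lemma zp_Cons[simp]: "zp pr (x # xs) = (pr, x) # zp (Some x) xs" by (simp add: zp_def)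

lemma zp_append: "zp pr (xs @ ys) = zp pr xs @ zp (lastopt pr xs) ys"
  by (induction xs arbitrary: pr) (auto simp: lastopt_def)

lemma zp_map_sh: "zp (map_option (sh k) pr) (map (sh k) ys) =
   map (\<lambda>(a, b). (map_option (sh k) a, sh k b)) (zp pr ys)"
proof (induction ys arbitrary: pr)
  case (Cons y ys)
  show ?case using Cons.IH[of "Some y"] by simp
qed simp

definition cnt :: "((nat \<times> bool) option \<Rightarrow> nat \<times> bool \<Rightarrow> bool) \<Rightarrow> (nat \<times> bool) option \<Rightarrow> cpath \<Rightarrow> nat" where
  "cnt G pr p = length (filter (case_prod G) (zp pr p))"

definition allp :: "((nat \<times> bool) option \<Rightarrow> nat \<times> bool \<Rightarrow> bool) \<Rightarrow> (nat \<times> bool) option \<Rightarrow> cpath \<Rightarrow> bool" where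
  "allp G pr p = list_all (case_prod G) (zp pr p)"

lemma cnt_Nil[simp]: "cnt G pr [] = 0" by (simp add: cnt_def)
lemma cnt_Cons[simp]: "cnt G pr (x # xs) = (if G pr x then 1 else 0) + cnt G (Some x) xs"
  by (simp add: cnt_def)
lemma allp_Nil[simp]: "allp G pr []" by (simp add: allp_def)
lemma allp_Cons[simp]: "allp G pr (x # xs) = (G pr x \<and> allp G (Some x) xs)"
  by (simp add: allp_def)
lemma cnt_append: "cnt G pr (xs @ ys) = cnt G pr xs + cnt G (lastopt pr xs) ys"
  by (simp add: cnt_def zp_append)
lemma allp_append: "allp G pr (xs @ ys) = (allp G pr xs \<and> allp G (lastopt pr xs) ys)"
  by (simp add: allp_def zp_append)
lemma cnt_sh:
  assumes "\<And>a b. G (map_option (sh k) a) (sh k b) = G a b"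
  shows "cnt G (map_option (sh k) pr) (map (sh k) ys) = cnt G pr ys"
proof (induction ys arbitrary: pr)
  case (Cons y ys)
  show ?case using Cons.IH[of "Some y"] assms by simp
qed simp

definition tF :: "(nat \<times> bool) option \<Rightarrow> nat \<times> bool \<Rightarrow> bool" where
  "tF pr x = (case pr of None \<Rightarrow> False | Some y \<Rightarrow> fst y < fst x)"
definition sF :: "(nat \<times> bool) option \<Rightarrow> nat \<times> bool \<Rightarrow> bool" where
  "sF pr x = (\<not> snd x \<and> (case pr of None \<Rightarrow> True | Some y \<Rightarrow> snd y \<or> fst y \<noteq> fst x))"
definition c2ok :: "(nat \<times> bool) option \<Rightarrow> nat \<times> bool \<Rightarrow> bool" where
  "c2ok pr x = (\<not> (0 < fst x \<and> (case pr of None \<Rightarrow> True | Some y \<Rightarrow> fst y < fst x)) \<or> \<not> snd x)"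

lemma card_Suc_split:
  "card {i. i < Suc n \<and> Q i} = (if Q 0 then 1 else 0) + card {i. i < n \<and> Q (Suc i)}"
proof -
  have e: "{i. i < Suc n \<and> Q i} = (if Q 0 then {0} else {}) \<union> Suc ` {i. i < n \<and> Q (Suc i)}"
    by (auto simp: image_iff less_Suc_eq_0_disj)
  have "card (Suc ` {i. i < n \<and> Q (Suc i)}) = card {i. i < n \<and> Q (Suc i)}"
    by (rule card_image) simp
  then show ?thesis unfolding e by (auto simp: card_insert_if)
qed

lemma turn_cnt_aux: "turn (x # xs) = cnt tF (Some x) xs"
proof (induction xs arbitrary: x)
  case Nil
  then show ?case by (simp add: turn_def)
next
  case (Cons y xs)
  have "turn (x # y # xs) = card {i. i < Suc (length xs) \<and> fst ((x#y#xs) ! i) < fst ((x#y#xs) ! (i + 1))}"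
    unfolding turn_def by (rule arg_cong[where f=card]) auto
  also have "\<dots> = (if fst x < fst y then 1 else 0) + turn (y # xs)"
    unfolding card_Suc_split turn_def by simp
  finally show ?case using Cons by (simp add: tF_def)
qed

lemma turn_cnt: "turn p = cnt tF None p"
proof (cases p)
  case Nil
  then show ?thesis by (simp add: turn_def)
next
  case (Cons x xs)
  then show ?thesis by (simp add: turn_cnt_aux tF_def)
qed

lemma length_zp[simp]: "length (zp pr p) = length p" by (simp add: zp_def)

lemma zp_nth: "i < length p \<Longrightarrow> zp pr p ! i = (if i = 0 then pr else Some (p ! (i - 1)), p ! i)"
  by (cases i) (simp_all add: zp_def)

lemma segment_cnt: "segment p = cnt sF None p"
  unfolding segment_def cnt_def length_filter_conv_card length_zp
  apply (rule arg_cong[where f=card], rule Collect_cong)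
  subgoal for i by (cases "i < length p") (auto simp: zp_nth sF_def)
  done

lemma red_len: "red p = length (filter snd p)"
  unfolding red_def length_filter_conv_card by simp

lemma cond2_allp: "cond2 p = allp c2ok None p"
  unfolding cond2_def allp_def list_all_length length_zp
  apply (rule all_cong)
  apply (auto simp: zp_nth c2ok_def)
  done

lemma cond1_all: "cond1 p = list_all (\<lambda>x. fst x = 0 \<longrightarrow> snd x) p"
  unfolding cond1_def list_all_length by simp


lemma dyck_lt: "dyck m E \<Longrightarrow> x \<in> set E \<Longrightarrow> fst x < m"
  unfolding dyck_def in_set_conv_nth by force

lemma dyck_first: "dyck m E \<Longrightarrow> E = e # E' \<Longrightarrow> fst e = 0"
  unfolding dyck_def by force

lemma dyck_sorted: "dyck m E \<Longrightarrow> sorted (map fst E)"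
  unfolding dyck_def by simp

fun retA :: "nat \<Rightarrow> cpath \<Rightarrow> nat" where
  "retA j [] = 0"
| "retA j (x # xs) = (if fst x = j then 1 else 0) + retA (Suc j) xs"

lemma retA_card: "retA j p = card {i. i < length p \<and> fst (p ! i) = i + j}"
proof (induction p arbitrary: j)
  case Nil
  then show ?case by simp
next
  case (Cons x xs)
  have "card {i. i < length (x # xs) \<and> fst ((x # xs) ! i) = i + j}
      = card {i. i < Suc (length xs) \<and> fst ((x # xs) ! i) = i + j}" by simp
  also have "\<dots> = (if fst x = j then 1 else 0) + card {i. i < length xs \<and> fst (xs ! i) = i + Suc j}"
    unfolding card_Suc_split by simp
  finally show ?case using Cons.IH[of "Suc j"] by simp
qed

lemma return_retA:
  assumes "dyck n p" shows "return p = retA 0 p"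
proof (cases n)
  case 0
  then have "p = []" using assms by (simp add: dyck_def)
  then show ?thesis by (simp add: return_def)
next
  case (Suc m)
  have len: "length p = n" and bd: "\<And>i. i < n \<Longrightarrow> fst (p ! i) \<le> i" using assms by (auto simp: dyck_def)
  have e1: "{i \<in> {1..length p}. (i, i) \<in> lattice_points p} = insert n {i. 0 < i \<and> i < n \<and> fst (p ! i) = i}"
  proof (rule set_eqI, rule iffI)
    fix i assume "i \<in> {i \<in> {1..length p}. (i, i) \<in> lattice_points p}"
    then have "1 \<le> i" "i \<le> n" "i \<le> (if i < n then fst (p ! i) else n)"
      by (auto simp: lattice_points_def len)
    then show "i \<in> insert n {i. 0 < i \<and> i < n \<and> fst (p ! i) = i}"
      using bd[of i] by (auto split: if_splits)
  next
    fix i assume a: "i \<in> insert n {i. 0 < i \<and> i < n \<and> fst (p ! i) = i}"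
    then have "1 \<le> i" "i \<le> n" using Suc by auto
    moreover have "fst (p ! (i - 1)) \<le> i"
    proof -
      have "i - 1 < n" using \<open>1 \<le> i\<close> \<open>i \<le> n\<close> by simp
      then have "fst (p ! (i - 1)) \<le> i - 1" using bd by blast
      then show ?thesis by simp
    qed
    ultimately show "i \<in> {i \<in> {1..length p}. (i, i) \<in> lattice_points p}"
      using a by (auto simp: lattice_points_def len)
  qed
  have f0: "fst (p ! 0) = 0" using bd[of 0] Suc by simp
  have e2: "{i. i < length p \<and> fst (p ! i) = i + 0} = insert 0 {i. 0 < i \<and> i < n \<and> fst (p ! i) = i}"
    using f0 Suc len by auto
  have fin: "finite {i. 0 < i \<and> i < n \<and> fst (p ! i) = i}" by simp
  show ?thesis unfolding return_def retA_card e1 e2 using fin by simp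
qed

lemma retA_append: "retA j (xs @ ys) = retA j xs + retA (j + length xs) ys"
  by (induction xs arbitrary: j) auto

lemma retA_sh: "retA (j + k) (map (sh k) ys) = retA j ys"
proof (induction ys arbitrary: j)
  case (Cons y ys)
  then show ?case using Cons.IH[of "Suc j"] by (simp add: sh_def)
qed simp

lemma retA_zero: "(\<forall>i<length xs. fst (xs ! i) < i + j) \<Longrightarrow> retA j xs = 0"
proof (induction xs arbitrary: j)
  case (Cons x xs)
  have "fst x < j" using Cons.prems by force
  moreover have "\<forall>i<length xs. fst (xs ! i) < i + Suc j"
  proof (intro allI impI)
    fix i assume "i < length xs"
    then show "fst (xs ! i) < i + Suc j" using Cons.prems[rule_format, of "Suc i"] by simp
  qed
  ultimately show ?case using Cons.IH by simp
qed simp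


lemma length_phi[simp]: "length (phi c E F) = Suc (length E + length F)"
  by (simp add: phi_def)

lemma sorted_map_plus: "sorted (map fst (F::cpath)) \<Longrightarrow> sorted (map (\<lambda>x. fst x + k) F)"
proof (induction F)
  case (Cons a F)
  have h: "\<forall>x\<in>set F. fst a + k \<le> fst x + k"
  proof
    fix x assume "x \<in> set F"
    then have "fst a \<le> fst x" using Cons.prems by simp
    then show "fst a + k \<le> fst x + k" by simp
  qed
  have "sorted (map fst F)" using Cons.prems by simp
  then show ?case using Cons.IH h by simp
qed simp

lemma fst_sh[simp]: "fst (sh k x) = fst x + k" and snd_sh[simp]: "snd (sh k x) = snd x"
  by (simp_all add: sh_def)

lemma dyck_phi:
  assumes E: "dyck (length E) E" and F: "dyck (length F) F"
  shows "dyck (Suc (length E + length F)) (phi c E F)"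
proof -
  let ?k = "Suc (length E)"
  have sE: "sorted (map fst E)" and sF: "sorted (map fst F)" using E F by (auto simp: dyck_def)
  have ltE: "\<And>x. x \<in> set E \<Longrightarrow> fst x < ?k" using dyck_lt[OF E] by fastforce
  have mp: "map fst (phi c E F) = 0 # map fst E @ map (\<lambda>x. fst x + ?k) F"
    by (simp add: phi_def comp_def)
  have "sorted (map fst (phi c E F))"
    unfolding mp using sE sorted_map_plus[OF sF, of ?k] ltE
    by (fastforce simp: sorted_append less_imp_le)
  moreover have "\<forall>i<Suc (length E + length F). fst (phi c E F ! i) \<le> i"
  proof (intro allI impI)
    fix i assume i: "i < Suc (length E + length F)"
    show "fst (phi c E F ! i) \<le> i"
    proof (cases i)
      case 0 then show ?thesis by (simp add: phi_def)
    next
      case (Suc j)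
      show ?thesis
      proof (cases "j < length E")
        case True
        then have "fst (E ! j) \<le> j" using E by (auto simp: dyck_def)
        then show ?thesis using True Suc by (simp add: phi_def nth_append)
      next
        case False
        have jl: "j - length E < length F" using i Suc False by simp
        then have "fst (F ! (j - length E)) \<le> j - length E" using F by (auto simp: dyck_def)
        then show ?thesis using False Suc jl by (simp add: phi_def nth_append)
      qed
    qed
  qed
  ultimately show ?thesis by (simp add: dyck_def)
qed

lemma lastopt_phi:
  assumes E: "dyck (length E) E"
  obtains y where "lastopt (Some (0, c)) E = Some y" "fst y < Suc (length E)"
proof -
  have "fst (last ((0, c) # E)) < Suc (length E)"
  proof -
    have "last ((0, c) # E) \<in> set ((0, c) # E)" by simp
    then show ?thesis using dyck_lt[OF E] by fastforce
  qed
  moreover have "lastopt (Some (0, c)) E = Some (last ((0, c) # E))"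
    by (simp add: lastopt_def)
  ultimately show ?thesis using that by blast
qed

lemma cond1_phi:
  assumes E: "dyck (length E) E"
  shows "cond1 (phi c E F) = (c \<and> cond1 E)"
  by (auto simp: cond1_all phi_def list_all_iff sh_def)

lemma allp_c2ok_sh:
  "sorted (map fst (a # xs)) \<Longrightarrow> allp c2ok (Some (sh k a)) (map (sh k) xs) = allp c2ok (Some a) xs"
proof (induction xs arbitrary: a)
  case (Cons x xs)
  have le: "fst a \<le> fst x" using Cons.prems by simp
  have s: "sorted (map fst (x # xs))" using Cons.prems by simp
  have "c2ok (Some (sh k a)) (sh k x) = c2ok (Some a) x"
    using le by (auto simp: c2ok_def)
  then show ?case using Cons.IH[OF s] by simp
qed simp

lemma cond2_phi:
  assumes E: "dyck (length E) E" and F: "dyck (length F) F"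
  shows "cond2 (phi c E F) = (cond2 E \<and> cond2 F \<and> (F \<noteq> [] \<longrightarrow> \<not> snd (F ! 0)))"
proof -
  let ?k = "Suc (length E)"
  obtain y where y: "lastopt (Some (0, c)) E = Some y" "fst y < ?k" using lastopt_phi[OF E] by blast
  have e1: "allp c2ok (Some (0, c)) E = allp c2ok None E"
  proof (cases E)
    case (Cons e E')
    then have "fst e = 0" using dyck_first[OF E] by simp
    then show ?thesis using Cons by (simp add: c2ok_def)
  qed simp
  have e2: "allp c2ok (Some y) (map (sh ?k) F) = (cond2 F \<and> (F \<noteq> [] \<longrightarrow> \<not> snd (F ! 0)))"
  proof (cases F)
    case Nil then show ?thesis by (simp add: cond2_allp)
  next
    case (Cons f F')
    have f0: "fst f = 0" using dyck_first[OF F Cons] .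
    have s: "sorted (map fst (f # F'))" using dyck_sorted[OF F] Cons by simp
    have "c2ok (Some y) (sh ?k f) = (\<not> snd f)" using y(2) by (auto simp: c2ok_def)
    moreover have "c2ok None f" using f0 by (simp add: c2ok_def)
    ultimately show ?thesis using Cons allp_c2ok_sh[OF s] by (auto simp: cond2_allp)
  qed
  show ?thesis
    unfolding cond2_allp phi_def using e1 e2 y(1)
    by (simp add: allp_append c2ok_def cond2_allp)
qed


lemma tF_sh: "tF (map_option (sh k) a) (sh k b) = tF a b"
  by (cases a) (auto simp: tF_def)

lemma sF_sh: "sF (map_option (sh k) a) (sh k b) = sF a b"
  by (cases a) (auto simp: sF_def)

lemma turn_phi:
  assumes E: "dyck (length E) E" and F: "dyck (length F) F"
  shows "turn (phi c E F) = turn E + (if F = [] then 0 else 1) + turn F"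
proof -
  let ?k = "Suc (length E)"
  obtain y where y: "lastopt (Some (0, c)) E = Some y" "fst y < ?k" using lastopt_phi[OF E] by blast
  have e1: "cnt tF (Some (0, c)) E = cnt tF None E"
  proof (cases E)
    case (Cons e E')
    then have "fst e = 0" using dyck_first[OF E] by simp
    then show ?thesis using Cons by (simp add: tF_def)
  qed simp
  have e2: "cnt tF (Some y) (map (sh ?k) F) = (if F = [] then 0 else 1) + cnt tF None F"
  proof (cases F)
    case Nil then show ?thesis by simp
  next
    case (Cons f F')
    have "tF (Some y) (sh ?k f)" using y(2) by (simp add: tF_def)
    moreover have "cnt tF (Some (sh ?k f)) (map (sh ?k) F') = cnt tF (Some f) F'"
      using cnt_sh[of tF ?k "Some f" F'] tF_sh by simp
    ultimately show ?thesis using Cons by (simp add: tF_def)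
  qed
  show ?thesis
    unfolding turn_cnt phi_def using e1 e2 y(1)
    by (simp add: cnt_append tF_def)
qed

lemma segment_phi:
  assumes E: "dyck (length E) E" and F: "dyck (length F) F"
  shows "segment (phi c E F) = (if \<not> c \<and> (E = [] \<or> snd (E ! 0)) then 1 else 0) + segment E + segment F"
proof -
  let ?k = "Suc (length E)"
  obtain y where y: "lastopt (Some (0, c)) E = Some y" "fst y < ?k" using lastopt_phi[OF E] by blast
  have e1: "(if \<not> c then 1 else 0) + cnt sF (Some (0, c)) E
      = (if \<not> c \<and> (E = [] \<or> snd (E ! 0)) then 1 else 0) + cnt sF None E"
  proof (cases E)
    case (Cons e E')
    then have "fst e = 0" using dyck_first[OF E] by simp
    then show ?thesis using Cons by (simp add: sF_def)
  qed simp
  have e2: "cnt sF (Some y) (map (sh ?k) F) = cnt sF None F"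
  proof (cases F)
    case Nil then show ?thesis by simp
  next
    case (Cons f F')
    have "sF (Some y) (sh ?k f) = sF None f" using y(2) by (auto simp: sF_def)
    then have "cnt sF (Some y) (map (sh ?k) F) = cnt sF (map_option (sh ?k) None) (map (sh ?k) F)"
      using Cons sF_sh[of ?k None f] by simp
    also have "\<dots> = cnt sF None F" using cnt_sh[of sF ?k None F] sF_sh by simp
    finally show ?thesis .
  qed
  have "segment (phi c E F) = (if \<not> c then 1 else 0) + cnt sF (Some (0, c)) E + cnt sF (Some y) (map (sh ?k) F)"
    unfolding segment_cnt phi_def using y(1) by (simp add: cnt_append sF_def)
  then show ?thesis using e1 e2 by (simp add: segment_cnt)
qed

lemma red_phi: "red (phi c E F) = (if c then 1 else 0) + red E + red F"
proof -
  have "filter snd (map (sh k) F) = map (sh k) (filter snd F)" for k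
    by (induction F) auto
  then show ?thesis by (simp add: red_len phi_def)
qed

lemma return_phi:
  assumes E: "dyck (length E) E" and F: "dyck (length F) F"
  shows "return (phi c E F) = Suc (return F)"
proof -
  have r0: "retA 1 E = 0"
  proof (rule retA_zero, intro allI impI)
    fix i assume "i < length E"
    then have "fst (E ! i) \<le> i" using E by (auto simp: dyck_def)
    then show "fst (E ! i) < i + 1" by simp
  qed
  have "retA (0 + Suc (length E)) (map (sh (Suc (length E))) F) = retA 0 F" by (rule retA_sh)
  then have r1: "retA (Suc (length E)) (map (sh (Suc (length E))) F) = retA 0 F" by simp
  have "return (phi c E F) = retA 0 (phi c E F)" by (rule return_retA[OF dyck_phi[OF E F]])
  also have "\<dots> = Suc (retA 0 F)" using r0 r1 by (simp add: phi_def retA_append)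
  finally show ?thesis using return_retA[OF F] by simp
qed

lemma stats_Nil[simp]: "turn [] = 0" "segment [] = 0" "red [] = 0" "return [] = 0"
  by (simp_all add: turn_def segment_def red_def return_def)

lemma wt_phi:
  assumes E: "dyck (length E) E" and F: "dyck (length F) F"
  shows "wt s t u v (phi c E F) =
    (if c then u else 1) * v * (if \<not> c \<and> (E = [] \<or> snd (E ! 0)) then t else 1) *
    wt s t u 1 E * (if F = [] then 1 else s * wt s t u v F)"
  unfolding wt_def turn_phi[OF E F] segment_phi[OF E F] return_phi[OF E F] red_phi
  by (auto simp: power_add mult_ac)


definition XF :: "nat \<Rightarrow> cpath set" where
  "XF j = {F. dyck j F \<and> cond2 F \<and> (F \<noteq> [] \<longrightarrow> \<not> snd (F ! 0))}"

lemma finite_dyck: "finite {p. dyck n p}"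
proof (rule finite_subset)
  show "{p. dyck n p} \<subseteq> {xs. set xs \<subseteq> {0..<n} \<times> (UNIV :: bool set) \<and> length xs = n}"
    using dyck_lt by (fastforce simp: dyck_def)
  show "finite {xs. set xs \<subseteq> {0..<n} \<times> (UNIV :: bool set) \<and> length xs = n}"
    by (rule finite_lists_length_eq) simp
qed

lemma finite_dyck_sub: "finite {p. dyck n p \<and> P p}"
  using finite_dyck by (rule finite_subset[rotated]) auto

lemma phi_char:
  assumes E: "dyck (length E) E" and F: "dyck (length F) F"
  shows "\<And>i. 1 \<le> i \<Longrightarrow> i \<le> length E \<Longrightarrow> fst (phi c E F ! i) < i"
    and "Suc (length E) < length (phi c E F) \<Longrightarrow> fst (phi c E F ! Suc (length E)) = Suc (length E)"
proof -
  fix i assume i: "1 \<le> i" "i \<le> length E"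
  then have "fst (E ! (i - 1)) \<le> i - 1" using E by (auto simp: dyck_def)
  moreover have "phi c E F ! i = E ! (i - 1)" using i by (cases i) (auto simp: phi_def nth_append)
  ultimately show "fst (phi c E F ! i) < i" using i by simp
next
  assume "Suc (length E) < length (phi c E F)"
  then obtain f F' where Fc: "F = f # F'" by (cases F) auto
  have "fst f = 0" using dyck_first[OF F Fc] .
  then show "fst (phi c E F ! Suc (length E)) = Suc (length E)"
    using Fc by (simp add: phi_def nth_append)
qed

lemma phi_inj:
  assumes E: "dyck (length E) E" and F: "dyck (length F) F"
    and E': "dyck (length E') E'" and F': "dyck (length F') F'"
    and eq: "phi c E F = phi c' E' F'"
  shows "E = E' \<and> F = F'"
proof -
  have lens: "length E = length E'"
  proof (rule ccontr)
    assume ne: "length E \<noteq> length E'"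
    show False
    proof (cases "length E < length E'")
      case True
      have l: "Suc (length E) < length (phi c E F)"
        using True arg_cong[OF eq, of length] by simp
      have "fst (phi c E F ! Suc (length E)) = Suc (length E)" using phi_char(2)[OF E F l] .
      moreover have "fst (phi c' E' F' ! Suc (length E)) < Suc (length E)"
        using phi_char(1)[OF E' F', of "Suc (length E)"] True by simp
      ultimately show False using eq by simp
    next
      case False
      then have F2: "length E' < length E" using ne by simp
      have "length E + length F = length E' + length F'" using arg_cong[OF eq, of length] by simp
      then have "0 < length F'" using F2 by linarith
      then have l: "Suc (length E') < length (phi c' E' F')" by simp
      have "fst (phi c' E' F' ! Suc (length E')) = Suc (length E')" using phi_char(2)[OF E' F' l] .
      moreover have "fst (phi c E F ! Suc (length E')) < Suc (length E')"
        using phi_char(1)[OF E F, of "Suc (length E')"] F2 by simp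
      ultimately show False using eq by simp
    qed
  qed
  have "E @ map (sh (Suc (length E))) F = E' @ map (sh (Suc (length E))) F'"
    using eq lens by (simp add: phi_def)
  then have "E = E'" and m: "map (sh (Suc (length E))) F = map (sh (Suc (length E))) F'"
    using lens by auto
  moreover have "inj (sh (Suc (length E)))" by (rule injI) (auto simp: sh_def prod_eq_iff)
  then have "F = F'" using m by (simp add: inj_map_eq_map)
  ultimately show ?thesis by simp
qed

lemma sorted_map_minus: "sorted (map fst (F::cpath)) \<Longrightarrow> sorted (map (\<lambda>x. fst x - k) F)"
proof (induction F)
  case (Cons a F)
  have h: "\<forall>x\<in>set F. fst a - k \<le> fst x - k"
  proof
    fix x assume "x \<in> set F"
    then have "fst a \<le> fst x" using Cons.prems by simp
    then show "fst a - k \<le> fst x - k" by simp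
  qed
  have "sorted (map fst F)" using Cons.prems by simp
  then show ?case using Cons.IH h by simp
qed simp

lemma decomp_surj:
  assumes D: "dyck n D" and n: "1 \<le> n"
  shows "\<exists>k E F. 1 \<le> k \<and> k \<le> n \<and> dyck (k - 1) E \<and> dyck (n - k) F \<and> D = phi (snd (D ! 0)) E F"
proof -
  define P where "P i = (1 \<le> i \<and> (i = n \<or> fst (D ! i) = i))" for i
  define k where "k = (LEAST i. P i)"
  have Pn: "P n" using n by (simp add: P_def)
  have Pk: "P k" unfolding k_def by (rule LeastI[of P, OF Pn])
  have kn: "k \<le> n" unfolding k_def by (rule Least_le[of P n, OF Pn])
  have mini: "\<And>i. i < k \<Longrightarrow> \<not> P i" unfolding k_def by (rule not_less_Least)
  have k1: "1 \<le> k" using Pk by (simp add: P_def)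
  have len: "length D = n" using D by (simp add: dyck_def)
  have sD: "sorted (map fst D)" using D by (simp add: dyck_def)
  have bd: "\<And>i. i < n \<Longrightarrow> fst (D ! i) \<le> i" using D by (simp add: dyck_def)
  define E where "E = take (k - 1) (tl D)"
  define F where "F = map (\<lambda>x. (fst x - k, snd x)) (drop k D)"
  have lE: "length E = k - 1" using kn k1 len by (simp add: E_def)
  have lF: "length F = n - k" using len by (simp add: F_def)
  have Enth: "\<And>i. i < k - 1 \<Longrightarrow> E ! i = D ! Suc i"
    using kn len by (simp add: E_def nth_tl)
  have Fnth: "\<And>i. i < n - k \<Longrightarrow> F ! i = (fst (D ! (k + i)) - k, snd (D ! (k + i)))"
    using kn len by (simp add: F_def)
  have dE: "dyck (k - 1) E"
  proof -
    have "sorted (map fst (tl D))" using sD by (simp add: map_tl sorted_tl)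
    then have "sorted (take (k - 1) (map fst (tl D)))" by (rule sorted_wrt_take)
    moreover have "map fst E = take (k - 1) (map fst (tl D))" unfolding E_def by (metis map_tl take_map)
    ultimately have "sorted (map fst E)" by simp
    moreover have "\<forall>i<k - 1. fst (E ! i) \<le> i"
    proof (intro allI impI)
      fix i assume i: "i < k - 1"
      then have "\<not> P (Suc i)" using mini by simp
      moreover have "Suc i < n" using i kn by simp
      ultimately have "fst (D ! Suc i) \<noteq> Suc i" by (simp add: P_def)
      moreover have "fst (D ! Suc i) \<le> Suc i" using bd \<open>Suc i < n\<close> by simp
      ultimately show "fst (E ! i) \<le> i" using Enth[OF i] by simp
    qed
    ultimately show ?thesis using lE by (simp add: dyck_def)
  qed
  have dF: "dyck (n - k) F"
  proof -
    have "sorted (map fst (drop k D))" using sD by (simp add: drop_map[symmetric] sorted_wrt_drop)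
    then have "sorted (map fst F)" unfolding F_def using sorted_map_minus by (simp add: comp_def)
    moreover have "\<forall>i<n - k. fst (F ! i) \<le> i"
    proof (intro allI impI)
      fix i assume i: "i < n - k"
      then have "fst (D ! (k + i)) \<le> k + i" using bd by simp
      then show "fst (F ! i) \<le> i" using Fnth[OF i] by simp
    qed
    ultimately show ?thesis using lF by (simp add: dyck_def)
  qed
  have D0: "D ! 0 = (0, snd (D ! 0))" using bd[of 0] n by (simp add: prod_eq_iff)
  have geq: "\<forall>x\<in>set (drop k D). k \<le> fst x"
  proof
    fix x assume "x \<in> set (drop k D)"
    then obtain j where j: "j < length (drop k D)" "x = drop k D ! j" by (auto simp: in_set_conv_nth)
    then have kj: "k + j < n" using len by simp
    then have "k < n" by simp
    then have "fst (D ! k) = k" using Pk by (simp add: P_def)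
    moreover have "fst (D ! k) \<le> fst (D ! (k + j))"
      using sorted_nth_mono[OF sD, of k "k + j"] kj len by simp
    ultimately show "k \<le> fst x" using j kn len by simp
  qed
  have mm: "map (sh k) F = drop k D"
    unfolding F_def map_map
  proof (rule map_idI)
    fix x assume "x \<in> set (drop k D)"
    then have "k \<le> fst x" using geq by blast
    then show "(sh k \<circ> (\<lambda>x. (fst x - k, snd x))) x = x" by (simp add: sh_def)
  qed
  have "D = D ! 0 # tl D" using n len by (cases D) auto
  also have "tl D = take (k - 1) (tl D) @ drop (k - 1) (tl D)" by simp
  also have "drop (k - 1) (tl D) = drop k D" using k1 drop_Suc[of "k - 1" D] by simp
  finally have "D = (0, snd (D ! 0)) # E @ map (sh k) F" using D0 mm by (simp add: E_def)
  then have "D = phi (snd (D ! 0)) E F" using lE k1 by (simp add: phi_def)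
  then show ?thesis using k1 kn dE dF by blast
qed


lemma dyck_len: "dyck m E \<Longrightarrow> length E = m" by (simp add: dyck_def)

lemma sum_decomp:
  fixes f :: "cpath \<Rightarrow> 'a::comm_monoid_add"
  assumes n: "1 \<le> n"
    and Q: "\<And>E F. dyck (length E) E \<Longrightarrow> dyck (length F) F \<Longrightarrow> Q (phi c E F) = PE E"
  shows "(\<Sum>D\<in>{D. dyck n D \<and> cond2 D \<and> snd (D ! 0) = c \<and> Q D}. f D) =
    (\<Sum>k=1..n. \<Sum>E\<in>{E. dyck (k - 1) E \<and> cond2 E \<and> PE E}. \<Sum>F\<in>XF (n - k). f (phi c E F))"
proof -
  define EE where "EE k = {E. dyck (k - 1) E \<and> cond2 E \<and> PE E}" for k
  define T where "T = {D. dyck n D \<and> cond2 D \<and> snd (D ! 0) = c \<and> Q D}"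
  define I where "I = (SIGMA k:{1..n}. EE k \<times> XF (n - k))"
  define h where "h = (\<lambda>z::nat \<times> cpath \<times> cpath. phi c (fst (snd z)) (snd (snd z)))"
  have finE: "finite (EE k)" for k unfolding EE_def by (rule finite_dyck_sub)
  have finF: "finite (XF j)" for j unfolding XF_def by (rule finite_dyck_sub)
  have "(\<Sum>k=1..n. \<Sum>E\<in>EE k. \<Sum>F\<in>XF (n - k). f (phi c E F))
      = (\<Sum>k=1..n. \<Sum>p\<in>EE k \<times> XF (n - k). f (phi c (fst p) (snd p)))"
    by (simp add: sum.cartesian_product split_def)
  also have "\<dots> = (\<Sum>z\<in>I. f (h z))"
    unfolding I_def h_def using finE finF
    by (subst sum.Sigma) (auto simp: split_def)
  also have "\<dots> = (\<Sum>D\<in>T. f D)"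
  proof (rule sum.reindex_bij_betw)
    show "bij_betw h I T"
      unfolding bij_betw_def
    proof (intro conjI)
      show "inj_on h I"
      proof (rule inj_onI)
        fix x y assume x: "x \<in> I" and y: "y \<in> I" and eq: "h x = h y"
        obtain k E F where xs: "x = (k, E, F)" by (cases x) auto
        obtain k' E' F' where ys: "y = (k', E', F')" by (cases y) auto
        have dE: "dyck (k - 1) E" and dF: "dyck (n - k) F" and k: "1 \<le> k"
          using x xs by (auto simp: I_def EE_def XF_def)
        have dE': "dyck (k' - 1) E'" and dF': "dyck (n - k') F'" and k': "1 \<le> k'"
          using y ys by (auto simp: I_def EE_def XF_def)
        have "E = E' \<and> F = F'"
          using phi_inj[of E F E' F' c c] dE dF dE' dF' eq xs ys
          by (simp add: h_def dyck_len)
        moreover have "k = k'" using dyck_len[OF dE] dyck_len[OF dE'] k k' calculation by simp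
        ultimately show "x = y" using xs ys by simp
      qed
      show "h ` I = T"
      proof (rule set_eqI, rule iffI)
        fix D assume "D \<in> h ` I"
        then obtain k E F where z: "(k, E, F) \<in> I" and D: "D = phi c E F" by (auto simp: h_def)
        have dE: "dyck (k - 1) E" and dF: "dyck (n - k) F" and k: "1 \<le> k" "k \<le> n"
          and cE: "cond2 E" and pE: "PE E" and cF: "cond2 F" and sF: "F \<noteq> [] \<longrightarrow> \<not> snd (F ! 0)"
          using z by (auto simp: I_def EE_def XF_def)
        have dE2: "dyck (length E) E" and dF2: "dyck (length F) F"
          using dE dF dyck_len by auto
        have "Suc (length E + length F) = n" using dyck_len[OF dE] dyck_len[OF dF] k by simp
        then have "dyck n D" using dyck_phi[OF dE2 dF2] D by simp
        moreover have "cond2 D" using cond2_phi[OF dE2 dF2] cE cF sF D by simp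
        moreover have "Q D" using Q[OF dE2 dF2] pE D by simp
        moreover have "snd (D ! 0) = c" using D by (simp add: phi_def)
        ultimately show "D \<in> T" by (simp add: T_def)
      next
        fix D assume "D \<in> T"
        then have dD: "dyck n D" and cD: "cond2 D" and c: "snd (D ! 0) = c" and qD: "Q D"
          by (auto simp: T_def)
        obtain k E F where k: "1 \<le> k" "k \<le> n" and dE: "dyck (k - 1) E" and dF: "dyck (n - k) F"
          and D: "D = phi (snd (D ! 0)) E F"
          using decomp_surj[OF dD n] by blast
        have D': "D = phi c E F" using D c by simp
        have dE2: "dyck (length E) E" and dF2: "dyck (length F) F"
          using dE dF dyck_len by auto
        have "cond2 E" "cond2 F" "F \<noteq> [] \<longrightarrow> \<not> snd (F ! 0)"
          using cond2_phi[OF dE2 dF2, of c] cD D' by auto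
        moreover have "PE E" using Q[OF dE2 dF2] qD D' by simp
        ultimately have "(k, E, F) \<in> I" using k dE dF by (simp add: I_def EE_def XF_def)
        moreover have "D = h (k, E, F)" using D' by (simp add: h_def)
        ultimately show "D \<in> h ` I" by blast
      qed
    qed
  qed
  finally show ?thesis unfolding EE_def T_def by simp
qed


lemma coeff_main:
  fixes a :: "'a::comm_ring_1"
  shows "fps_nth (fps_const a * fps_X * P * Q) n =
    (if n = 0 then 0 else a * (\<Sum>i=0..n - 1. fps_nth P i * fps_nth Q (n - 1 - i)))"
proof -
  have e: "fps_const a * fps_X * P * Q = fps_const a * (fps_X * (P * Q))" by (simp add: mult.assoc)
  have "fps_nth (fps_const a * (fps_X * (P * Q))) n = a * fps_nth (fps_X * (P * Q)) n"
    by (rule fps_mult_left_const_nth)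
  also have "\<dots> = a * (if n = 0 then 0 else fps_nth (P * Q) (n - 1))"
    by (simp only: fps_X_mult_nth)
  also have "\<dots> = (if n = 0 then 0 else a * (\<Sum>i=0..n - 1. fps_nth P i * fps_nth Q (n - 1 - i)))"
    by (simp only: fps_mult_nth) simp
  finally show ?thesis unfolding e .
qed

lemma gf_nth: "fps_nth (gf X s t u v) n = (if n = 0 then 0 else \<Sum>p\<in>X n. wt s t u v p)"
  by (simp add: gf_def)

lemma dyck0: "dyck 0 p = (p = [])" by (auto simp: dyck_def)

lemma wt_Nil[simp]: "wt s t u v [] = 1" by (simp add: wt_def)

lemma shift_sum: "(\<Sum>k=1..n. g k) = (\<Sum>i=0..n - 1. g (Suc i))" if "1 \<le> n"
proof -
  have "{1..n} = {Suc 0..Suc (n - 1)}" using that by auto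
  moreover have "sum g {Suc 0..Suc (n - 1)} = (\<Sum>i=0..n - 1. g (Suc i))"
    by (rule sum.shift_bounds_cl_Suc_ivl)
  ultimately show ?thesis by simp
qed

lemma Q_nth:
  fixes s t u v :: "'a::comm_ring_1"
  shows "fps_nth (1 + fps_const s * gf setB s t u v) j = (\<Sum>F\<in>XF j. if F = [] then 1 else s * wt s t u v F)"
proof (cases j)
  case 0
  have "XF 0 = {[]}" by (auto simp: XF_def dyck0 cond2_def)
  then show ?thesis using 0 by (simp add: gf_nth)
next
  case (Suc m)
  have "XF j = setB j" using Suc by (auto simp: XF_def setB_def dyck_def)
  moreover have "\<And>F. F \<in> setB j \<Longrightarrow> F \<noteq> []" by (auto simp: setB_def dyck_def)
  ultimately show ?thesis using Suc by (simp add: gf_nth sum_distrib_left)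
qed

definition XC :: "nat \<Rightarrow> cpath set" where "XC i = {E. dyck i E \<and> cond2 E}"

lemma XC_split: "0 < i \<Longrightarrow> XC i = setB i \<union> setR i"
  by (auto simp: XC_def setB_def setR_def)

lemma XC0: "XC 0 = {[]}" by (auto simp: XC_def dyck0 cond2_def)

lemma finite_setB: "finite (setB i)" and finite_setR: "finite (setR i)"
  unfolding setB_def setR_def by (rule finite_dyck_sub)+

lemma PB_nth:
  fixes s t u :: "'a::comm_ring_1"
  shows "fps_nth (fps_const t + fps_const t * gf setR s t u 1 + gf setB s t u 1) i =
    (\<Sum>E\<in>XC i. (if E = [] \<or> snd (E ! 0) then t else 1) * wt s t u 1 E)"
proof (cases i)
  case 0
  then show ?thesis by (simp add: gf_nth XC0)
next
  case (Suc m)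
  have dis: "setB i \<inter> setR i = {}" by (auto simp: setB_def setR_def)
  have "(\<Sum>E\<in>XC i. (if E = [] \<or> snd (E ! 0) then t else 1) * wt s t u 1 E)
     = (\<Sum>E\<in>setB i. (if E = [] \<or> snd (E ! 0) then t else 1) * wt s t u 1 E)
     + (\<Sum>E\<in>setR i. (if E = [] \<or> snd (E ! 0) then t else 1) * wt s t u 1 E)"
    using Suc XC_split[of i] dis finite_setB finite_setR by (simp add: sum.union_disjoint)
  also have "(\<Sum>E\<in>setB i. (if E = [] \<or> snd (E ! 0) then t else 1) * wt s t u 1 E) = (\<Sum>E\<in>setB i. wt s t u 1 E)"
    by (rule sum.cong) (auto simp: setB_def dyck_def)
  also have "(\<Sum>E\<in>setR i. (if E = [] \<or> snd (E ! 0) then t else 1) * wt s t u 1 E) = (\<Sum>E\<in>setR i. t * wt s t u 1 E)"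
    by (rule sum.cong) (auto simp: setR_def)
  finally show ?thesis using Suc by (simp add: gf_nth sum_distrib_left)
qed

lemma PR_nth:
  fixes s t u :: "'a::comm_ring_1"
  shows "fps_nth (1 + gf setR s t u 1 + gf setB s t u 1) i = (\<Sum>E\<in>XC i. wt s t u 1 E)"
proof (cases i)
  case 0
  then show ?thesis by (simp add: gf_nth XC0)
next
  case (Suc m)
  have dis: "setB i \<inter> setR i = {}" by (auto simp: setB_def setR_def)
  show ?thesis using Suc XC_split[of i] dis finite_setB finite_setR
    by (simp add: gf_nth sum.union_disjoint)
qed

lemma PA_nth:
  fixes s t u :: "'a::comm_ring_1"
  shows "fps_nth (1 + gf setA s t u 1) i = (\<Sum>E\<in>setA i. wt s t u 1 E)"
proof (cases i)
  case 0
  have "setA 0 = {[]}" by (auto simp: setA_def dyck0 cond1_def cond2_def)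
  then show ?thesis using 0 by (simp add: gf_nth)
qed (simp add: gf_nth)


lemma triple_sum:
  fixes c :: "'a::comm_ring_1"
  shows "(\<Sum>k\<in>K. \<Sum>x\<in>A k. \<Sum>y\<in>B k. c * (f x * g y)) = c * (\<Sum>k\<in>K. (\<Sum>x\<in>A k. f x) * (\<Sum>y\<in>B k. g y))"
proof -
  have "\<And>k. (\<Sum>x\<in>A k. f x) * (\<Sum>y\<in>B k. g y) = (\<Sum>x\<in>A k. \<Sum>y\<in>B k. f x * g y)"
    by (rule sum_product)
  then show ?thesis by (simp add: sum_distrib_left)
qed

lemma mem_dyck: "dyck m E \<Longrightarrow> dyck (length E) E" using dyck_len by simp

lemma partA:
  fixes s t u v :: "'a::comm_ring_1"
  shows "gf setA s t u v =
           fps_const (u * v) * fps_X * (1 + gf setA s t u 1) * (1 + fps_const s * gf setB s t u v)"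
proof (rule fps_ext)
  fix n
  show "fps_nth (gf setA s t u v) n =
    fps_nth (fps_const (u * v) * fps_X * (1 + gf setA s t u 1) * (1 + fps_const s * gf setB s t u v)) n"
  proof (cases "n = 0")
    case True then show ?thesis unfolding coeff_main gf_nth by simp
  next
    case False
    then have n: "1 \<le> n" by simp
    have sA: "setA n = {D. dyck n D \<and> cond2 D \<and> snd (D ! 0) = True \<and> cond1 D}"
    proof (rule set_eqI, rule iffI)
      fix D assume "D \<in> setA n"
      then have d: "dyck n D" "cond1 D" "cond2 D" by (auto simp: setA_def)
      have bd: "\<forall>i<n. fst (D ! i) \<le> i" and ln: "length D = n" using d(1) by (auto simp: dyck_def)
      have "fst (D ! 0) = 0" using bd[rule_format, of 0] n by simp
      moreover have "\<forall>i<length D. fst (D ! i) = 0 \<longrightarrow> snd (D ! i)" using d(2) by (simp add: cond1_def)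
      ultimately have "snd (D ! 0)" using ln n by auto
      then show "D \<in> {D. dyck n D \<and> cond2 D \<and> snd (D ! 0) = True \<and> cond1 D}" using d by simp
    qed (auto simp: setA_def)
    have EE: "\<And>k. {E. dyck (k - 1) E \<and> cond2 E \<and> cond1 E} = setA (k - 1)" by (auto simp: setA_def)
    have step: "\<And>k E F. E \<in> setA (k - 1) \<Longrightarrow> F \<in> XF (n - k) \<Longrightarrow>
        wt s t u v (phi True E F) = (u * v) * (wt s t u 1 E * (if F = [] then 1 else s * wt s t u v F))"
    proof -
      fix k E F assume "E \<in> setA (k - 1)" "F \<in> XF (n - k)"
      then have "dyck (k - 1) E" "dyck (n - k) F" by (auto simp: setA_def XF_def)
      then have "dyck (length E) E" "dyck (length F) F" using mem_dyck by auto
      then show "wt s t u v (phi True E F) = (u * v) * (wt s t u 1 E * (if F = [] then 1 else s * wt s t u v F))"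
        by (simp add: wt_phi mult_ac)
    qed
    have "(\<Sum>D\<in>setA n. wt s t u v D) = (\<Sum>k=1..n. \<Sum>E\<in>setA (k - 1). \<Sum>F\<in>XF (n - k). wt s t u v (phi True E F))"
      unfolding sA EE[symmetric] by (rule sum_decomp[OF n]) (simp add: cond1_phi)
    also have "\<dots> = (\<Sum>k=1..n. \<Sum>E\<in>setA (k - 1). \<Sum>F\<in>XF (n - k).
        (u * v) * (wt s t u 1 E * (if F = [] then 1 else s * wt s t u v F)))"
      using step by (intro sum.cong refl) auto
    also have "\<dots> = (u * v) * (\<Sum>k=1..n. (\<Sum>E\<in>setA (k - 1). wt s t u 1 E) *
        (\<Sum>F\<in>XF (n - k). if F = [] then 1 else s * wt s t u v F))"
      by (rule triple_sum)
    also have "\<dots> = (u * v) * (\<Sum>i=0..n - 1. fps_nth (1 + gf setA s t u 1) i *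
        fps_nth (1 + fps_const s * gf setB s t u v) (n - 1 - i))"
      unfolding PA_nth Q_nth shift_sum[OF n] by simp
    finally show ?thesis using False unfolding coeff_main gf_nth by simp
  qed
qed

lemma partB:
  fixes s t u v :: "'a::comm_ring_1"
  shows "gf setB s t u v =
           fps_const v * fps_X * (fps_const t + fps_const t * gf setR s t u 1 + gf setB s t u 1)
             * (1 + fps_const s * gf setB s t u v)"
proof (rule fps_ext)
  fix n
  show "fps_nth (gf setB s t u v) n =
    fps_nth (fps_const v * fps_X * (fps_const t + fps_const t * gf setR s t u 1 + gf setB s t u 1)
             * (1 + fps_const s * gf setB s t u v)) n"
  proof (cases "n = 0")
    case True then show ?thesis unfolding coeff_main gf_nth by simp
  next
    case False
    then have n: "1 \<le> n" by simp
    have sB: "setB n = {D. dyck n D \<and> cond2 D \<and> snd (D ! 0) = False \<and> True}"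
      using n by (auto simp: setB_def)
    have EE: "\<And>k. {E. dyck (k - 1) E \<and> cond2 E \<and> True} = XC (k - 1)" by (auto simp: XC_def)
    have step: "\<And>k E F. E \<in> XC (k - 1) \<Longrightarrow> F \<in> XF (n - k) \<Longrightarrow>
        wt s t u v (phi False E F) = v * (((if E = [] \<or> snd (E ! 0) then t else 1) * wt s t u 1 E)
           * (if F = [] then 1 else s * wt s t u v F))"
    proof -
      fix k E F assume "E \<in> XC (k - 1)" "F \<in> XF (n - k)"
      then have "dyck (k - 1) E" "dyck (n - k) F" by (auto simp: XC_def XF_def)
      then have "dyck (length E) E" "dyck (length F) F" using mem_dyck by auto
      then show "wt s t u v (phi False E F) = v * (((if E = [] \<or> snd (E ! 0) then t else 1) * wt s t u 1 E)
           * (if F = [] then 1 else s * wt s t u v F))"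
        by (simp add: wt_phi mult_ac)
    qed
    have "(\<Sum>D\<in>setB n. wt s t u v D) = (\<Sum>k=1..n. \<Sum>E\<in>XC (k - 1). \<Sum>F\<in>XF (n - k). wt s t u v (phi False E F))"
      unfolding sB EE[symmetric] by (rule sum_decomp[OF n]) simp
    also have "\<dots> = (\<Sum>k=1..n. \<Sum>E\<in>XC (k - 1). \<Sum>F\<in>XF (n - k).
        v * (((if E = [] \<or> snd (E ! 0) then t else 1) * wt s t u 1 E)
           * (if F = [] then 1 else s * wt s t u v F)))"
      using step by (intro sum.cong refl) auto
    also have "\<dots> = v * (\<Sum>k=1..n. (\<Sum>E\<in>XC (k - 1). (if E = [] \<or> snd (E ! 0) then t else 1) * wt s t u 1 E) *
        (\<Sum>F\<in>XF (n - k). if F = [] then 1 else s * wt s t u v F))"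
      by (rule triple_sum)
    also have "\<dots> = v * (\<Sum>i=0..n - 1. fps_nth (fps_const t + fps_const t * gf setR s t u 1 + gf setB s t u 1) i *
        fps_nth (1 + fps_const s * gf setB s t u v) (n - 1 - i))"
      unfolding PB_nth Q_nth shift_sum[OF n] by simp
    finally show ?thesis using False unfolding coeff_main gf_nth by simp
  qed
qed

lemma partR:
  fixes s t u v :: "'a::comm_ring_1"
  shows "gf setR s t u v =
           fps_const (u * v) * fps_X * (1 + gf setR s t u 1 + gf setB s t u 1)
             * (1 + fps_const s * gf setB s t u v)"
proof (rule fps_ext)
  fix n
  show "fps_nth (gf setR s t u v) n =
    fps_nth (fps_const (u * v) * fps_X * (1 + gf setR s t u 1 + gf setB s t u 1)
             * (1 + fps_const s * gf setB s t u v)) n"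
  proof (cases "n = 0")
    case True then show ?thesis unfolding coeff_main gf_nth by simp
  next
    case False
    then have n: "1 \<le> n" by simp
    have sR: "setR n = {D. dyck n D \<and> cond2 D \<and> snd (D ! 0) = True \<and> True}"
      using n by (auto simp: setR_def)
    have EE: "\<And>k. {E. dyck (k - 1) E \<and> cond2 E \<and> True} = XC (k - 1)" by (auto simp: XC_def)
    have step: "\<And>k E F. E \<in> XC (k - 1) \<Longrightarrow> F \<in> XF (n - k) \<Longrightarrow>
        wt s t u v (phi True E F) = (u * v) * (wt s t u 1 E * (if F = [] then 1 else s * wt s t u v F))"
    proof -
      fix k E F assume "E \<in> XC (k - 1)" "F \<in> XF (n - k)"
      then have "dyck (k - 1) E" "dyck (n - k) F" by (auto simp: XC_def XF_def)
      then have "dyck (length E) E" "dyck (length F) F" using mem_dyck by auto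
      then show "wt s t u v (phi True E F) = (u * v) * (wt s t u 1 E * (if F = [] then 1 else s * wt s t u v F))"
        by (simp add: wt_phi mult_ac)
    qed
    have "(\<Sum>D\<in>setR n. wt s t u v D) = (\<Sum>k=1..n. \<Sum>E\<in>XC (k - 1). \<Sum>F\<in>XF (n - k). wt s t u v (phi True E F))"
      unfolding sR EE[symmetric] by (rule sum_decomp[OF n]) simp
    also have "\<dots> = (\<Sum>k=1..n. \<Sum>E\<in>XC (k - 1). \<Sum>F\<in>XF (n - k).
        (u * v) * (wt s t u 1 E * (if F = [] then 1 else s * wt s t u v F)))"
      using step by (intro sum.cong refl) auto
    also have "\<dots> = (u * v) * (\<Sum>k=1..n. (\<Sum>E\<in>XC (k - 1). wt s t u 1 E) *
        (\<Sum>F\<in>XF (n - k). if F = [] then 1 else s * wt s t u v F))"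
      by (rule triple_sum)
    also have "\<dots> = (u * v) * (\<Sum>i=0..n - 1. fps_nth (1 + gf setR s t u 1 + gf setB s t u 1) i *
        fps_nth (1 + fps_const s * gf setB s t u v) (n - 1 - i))"
      unfolding PR_nth Q_nth shift_sum[OF n] by simp
    finally show ?thesis using False unfolding coeff_main gf_nth by simp
  qed
qed

theorem lemma4p3:
  fixes s t u v :: "'a::comm_ring_1"
  shows "gf setA s t u v =
           fps_const (u * v) * fps_X * (1 + gf setA s t u 1) * (1 + fps_const s * gf setB s t u v) \<and>
         gf setB s t u v =
           fps_const v * fps_X * (fps_const t + fps_const t * gf setR s t u 1 + gf setB s t u 1)
             * (1 + fps_const s * gf setB s t u v) \<and>
         gf setR s t u v =
           fps_const (u * v) * fps_X * (1 + gf setR s t u 1 + gf setB s t u 1)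
             * (1 + fps_const s * gf setB s t u v)"
  using partA partB partR by blast

end
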